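(* Let $h\ge 2$ be an integer and $\lambda_G,\lambda_L,\gamma>0$. Let $S=\{(a,b): a\ge 1,\ b\ge 1,\ a+b\le h\}\cup\{(0,1)^\ast\}$ and let $\mathbf{P}=(p_{s,t})_{s,t\in S}$, $\Phi=(\phi_{s,t})_{s,t\in S}$ be the matrices whose only non-zero entries are as follows: for $(a,b)\in S$ with $a\ge 1$, $p_{(a,b),(a-1,b+1)}=\frac{a\lambda_L}{a\lambda_L+\gamma}$ and $\phi_{(a,b),(a-1,b+1)}=\frac{a\lambda_L}{b(a\lambda_L+\gamma)}$ if $a>1$; $p_{(1,b),(0,1)^\ast}=\frac{\lambda_L}{\lambda_L+\gamma}$ and $\phi_{(1,b),(0,1)^\ast}=\frac{\lambda_L}{b(\lambda_L+\gamma)}$; $p_{(a,b),(a,b-1)}=\frac{(b-1)\gamma}{b(a\lambda_L+\gamma)}$ if $b\ge 2$; $\phi_{(a,b),(h-1,1)}=\frac{\lambda_G}{b(a\lambda_L+\gamma)}$; and $\phi_{(0,1)^\ast,(h-1,1)}=\lambda_G/\gamma$ (the row of $\mathbf{P}$ indexed by $(0,1)^\ast$ is zero). Let $\mathbf{M}=(\mathbf{I}-\mathbf{P})^{-1}\Phi$ and $\mu_G=\lambda_G/\gamma$. Let $\mathbf{y}^{(0)}$ be the row vector indexed by $S$ with $y^{(0)}_{(h-1,1)}=1$ and all other entries $0$, and for $n\ge 1$ let $\mathbf{y}^{(n)}=\mathbf{y}^{(n-1)}\mathbf{M}=\mathbf{y}^{(0)}\mathbf{M}^n$ (the vector of mean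 numbers of infectives of each type in generation $n$ of the epidemic). For $i=0,\ldots,h-1$ let $\mu_i$ be the mean number of infectives in generation $i$ of the single-household epidemic described in the context. Define $x_{n,i}$ ($n\ge 0$, $0\le i\le h-1$) by $x_{0,0}=1$, $x_{0,i}=0$ for $i\ge 1$, and for $n\ge 1$: $x_{n,0}=\mu_G\sum_{i=0}^{h-1}x_{n-1,i}$ and $x_{n,i}=\mu_i x_{n-i,0}$ for $1\le i\le h-1$ (with $x_{m,0}=0$ for $m<0$). Then for all $n=0,1,2,\ldots$, $$y^{(n)}_{(h-1,1)}=x_{n,0},$$ and, writing $y_n=\sum_{s\in S}y^{(n)}_s$ and $x_n=\sum_{j=0}^{h-1}x_{n,j}$, we have $y_n=x_n$.
   Context: Single-household Markovian SIR epidemic: a household of $h$ individuals initially contains one infective and $h-1$ susceptibles. Each infective remains infectious for an exponentially distributed time with rate $\gamma$ (independently), during which it makes contacts with each other given household member at the points of independent homogeneous Poisson processes of rate $\lambda_L$; a contacted susceptible immediately becomes infectious. Generations: the initial infective is in generation $0$, and an individual infected by an infective of generation $i-1$ is in generation $i$. In the full household model, each infective additionally makes global contacts at rate $\lambda_G$, each creating a new infectious household in state $(h-1,1)$; a state $(a,b)$ denotes a household with $a$ susceptibles and $b$ infectives, and states with no susceptibles are amalgamated into $(0,1)^\ast$. $\mathbf{M}$ is the mean reproduction matrix: $m_{s,t}$ is the mean number of type-$t$ infectives generated by an individual infected as a member of a type-$s$ infectious unit. The quantity $x_{n,i}$ is the mean number of individuals in generation $n$ of the epidemic who belong to generation $i$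 of their household epidemic. *)

theory Defs
  imports Complex_Main
begin

text \<open>State of the household epidemic (embedded jump chain of the continuous-time
Markov chain): s = number of susceptibles, c = list whose j-th entry is the number of
current infectives belonging to household generation j.  Each infective of generation j
infects each susceptible at rate lL (the new infective has generation j+1) and recovers
at rate g.  genF lL g i s c is the expected number of further infections that produce an
individual of household generation i, starting from state (s,c).\<close>

lemma sum_list_upd_inc: "sum_list (c[k := c ! k + 1]) \<le> sum_list c + (1::nat)"
proof (cases "k < length c")
  case True then show ?thesis by (simp add: sum_list_update)
next
  case False then show ?thesis by (simp add: list_update_beyond)
qed

lemma sum_list_upd_dec: "j < length c \<Longrightarrow> 0 < c ! j \<Longrightarrow>
    sum_list (c[j := c ! j - 1]) < sum_list (c::nat list)"
  using elem_le_sum_list[of j c] by (simp add: sum_list_update)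

function genF :: "real \<Rightarrow> real \<Rightarrow> nat \<Rightarrow> nat \<Rightarrow> nat list \<Rightarrow> real" where
  "genF lL g i s c =
    (if sum_list c = 0 then 0 else
      (let R = real (sum_list c) * (lL * real s + g) in
        (\<Sum>j<length c. (real (c ! j) * lL * real s / R) *
            ((if Suc j = i then 1 else 0) +
             (if 0 < s \<and> 0 < c ! j then genF lL g i (s - 1) (c[Suc j := c ! Suc j + 1]) else 0)))
      + (\<Sum>j<length c. (real (c ! j) * g / R) *
            (if 0 < c ! j then genF lL g i s (c[j := c ! j - 1]) else 0))))"
  by pat_completeness auto
termination
proof (relation "measure (\<lambda>(lL, g, i, s, c). 2 * s + sum_list c)")
  show "wf (measure (\<lambda>(lL, g, i, s, c). 2 * s + sum_list c))" by simp
next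
  fix lL g :: real and i s :: nat and c :: "nat list" and x j
  assume "0 < s \<and> 0 < c ! j"
  then show "((lL, g, i, s - 1, c[Suc j := c ! Suc j + 1]), lL, g, i, s, c)
      \<in> measure (\<lambda>(lL, g, i, s, c). 2 * s + sum_list c)"
    using sum_list_upd_inc[of c "Suc j"] by (simp, linarith)
next
  fix lL g :: real and i s :: nat and c :: "nat list" and x j
  assume "j \<in> {..<length c}" "0 < c ! j"
  then show "((lL, g, i, s, c[j := c ! j - 1]), lL, g, i, s, c)
      \<in> measure (\<lambda>(lL, g, i, s, c). 2 * s + sum_list c)"
    using sum_list_upd_dec[of j c] by simp
qed

definition mu :: "real \<Rightarrow> real \<Rightarrow> nat \<Rightarrow> nat \<Rightarrow> real" where
  "mu lL g h i = (if i = 0 then 1 else genF lL g i (h - 1) (1 # replicate (h - 1) 0))"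

text \<open>Some (a,b) is the state (a,b); None is the amalgamated state (0,1)*.\<close>
definition typesS :: "nat \<Rightarrow> (nat \<times> nat) option set" where
  "typesS h = {Some (a, b) | a b. 1 \<le> a \<and> 1 \<le> b \<and> a + b \<le> h} \<union> {None}"

definition Pmat :: "real \<Rightarrow> real \<Rightarrow> (nat \<times> nat) option \<Rightarrow> (nat \<times> nat) option \<Rightarrow> real" where
  "Pmat lL g s t = (case s of None \<Rightarrow> 0
     | Some (a, b) \<Rightarrow>
        (if 1 < a \<and> t = Some (a - 1, b + 1) then real a * lL / (real a * lL + g) else 0)
      + (if a = 1 \<and> t = None then lL / (lL + g) else 0)
      + (if 2 \<le> b \<and> t = Some (a, b - 1)
           then (real b - 1) * g / (real b * (real a * lL + g)) else 0))"

definition Phimat :: "nat \<Rightarrow> real \<Rightarrow> real \<Rightarrow> real \<Rightarrow> (nat \<times> nat) option \<Rightarrow> (nat \<times> nat) option \<Rightarrow> real" where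
  "Phimat h lG lL g s t = (case s of
       None \<Rightarrow> (if t = Some (h - 1, 1) then lG / g else 0)
     | Some (a, b) \<Rightarrow>
        (if 1 < a \<and> t = Some (a - 1, b + 1) then real a * lL / (real b * (real a * lL + g)) else 0)
      + (if a = 1 \<and> t = None then lL / (real b * (lL + g)) else 0)
      + (if t = Some (h - 1, 1) then lG / (real b * (real a * lL + g)) else 0))"

definition matmul :: "'a set \<Rightarrow> ('a \<Rightarrow> 'a \<Rightarrow> real) \<Rightarrow> ('a \<Rightarrow> 'a \<Rightarrow> real) \<Rightarrow> 'a \<Rightarrow> 'a \<Rightarrow> real" where
  "matmul S A B = (\<lambda>s t. \<Sum>u\<in>S. A s u * B u t)"

definition idmat :: "'a \<Rightarrow> 'a \<Rightarrow> real" where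
  "idmat = (\<lambda>s t. if s = t then 1 else 0)"

definition matinv :: "'a set \<Rightarrow> ('a \<Rightarrow> 'a \<Rightarrow> real) \<Rightarrow> 'a \<Rightarrow> 'a \<Rightarrow> real" where
  "matinv S A = (THE B. (\<forall>s\<in>S. \<forall>t\<in>S. matmul S A B s t = idmat s t \<and> matmul S B A s t = idmat s t)
                       \<and> (\<forall>s t. s \<notin> S \<or> t \<notin> S \<longrightarrow> B s t = 0))"

definition Mmat :: "nat \<Rightarrow> real \<Rightarrow> real \<Rightarrow> real \<Rightarrow> (nat \<times> nat) option \<Rightarrow> (nat \<times> nat) option \<Rightarrow> real" where
  "Mmat h lG lL g = matmul (typesS h)
      (matinv (typesS h) (\<lambda>s t. idmat s t - Pmat lL g s t)) (Phimat h lG lL g)"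

fun yvec :: "nat \<Rightarrow> real \<Rightarrow> real \<Rightarrow> real \<Rightarrow> nat \<Rightarrow> (nat \<times> nat) option \<Rightarrow> real" where
  "yvec h lG lL g 0 = (\<lambda>t. if t = Some (h - 1, 1) then 1 else 0)"
| "yvec h lG lL g (Suc n) = (\<lambda>t. \<Sum>s\<in>typesS h. yvec h lG lL g n s * Mmat h lG lL g s t)"

text \<open>The recursion x_{n,i}; muG = lG/g, muf i = mu_i.  Values for i >= h are set to 0.\<close>
function xgen :: "nat \<Rightarrow> real \<Rightarrow> (nat \<Rightarrow> real) \<Rightarrow> nat \<Rightarrow> nat \<Rightarrow> real" where
  "xgen h muG muf n i =
     (if n = 0 then (if i = 0 then 1 else 0)
      else if i = 0 then muG * (\<Sum>k<h. xgen h muG muf (n - 1) k)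
      else if i < h \<and> i \<le> n then muf i * xgen h muG muf (n - i) 0
      else 0)"
  by pat_completeness auto
termination
  by (relation "measure (\<lambda>(h, muG, muf, n, i). n)") auto

end

theory Submission
  imports Defs
begin



lemma matmul_assoc:
  assumes "finite S"
  shows "matmul S (matmul S A B) C s t = matmul S A (matmul S B C) s t"
  unfolding matmul_def
  by (simp add: sum_distrib_left sum_distrib_right mult.assoc, rule sum.swap)

lemma matmul_id_left: "finite S \<Longrightarrow> s \<in> S \<Longrightarrow> matmul S idmat B s t = B s t"
proof -
  assume "finite S" "s \<in> S"
  have eq: "(\<lambda>u. idmat s u * B u t) = (\<lambda>u. if u = s then B s t else 0)" by (auto simp: idmat_def)
  show ?thesis unfolding matmul_def eq using \<open>finite S\<close> \<open>s \<in> S\<close> by simp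
qed

lemma matmul_id_right: "finite S \<Longrightarrow> t \<in> S \<Longrightarrow> matmul S A idmat s t = A s t"
proof -
  assume "finite S" "t \<in> S"
  have eq: "(\<lambda>u. A s u * idmat u t) = (\<lambda>u. if u = t then A s t else 0)" by (auto simp: idmat_def)
  show ?thesis unfolding matmul_def eq using \<open>finite S\<close> \<open>t \<in> S\<close> by simp
qed

primrec mpow :: "'a set \<Rightarrow> ('a \<Rightarrow> 'a \<Rightarrow> real) \<Rightarrow> nat \<Rightarrow> 'a \<Rightarrow> 'a \<Rightarrow> real" where
  "mpow S P 0 = idmat"
| "mpow S P (Suc k) = matmul S P (mpow S P k)"

lemma mpow_comm:
  assumes "finite S" "s \<in> S" "t \<in> S"
  shows "matmul S (mpow S P k) P s t = matmul S P (mpow S P k) s t"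
  using assms(2,3)
proof (induction k arbitrary: s t)
  case 0
  then show ?case using assms(1) by (simp add: matmul_id_left matmul_id_right)
next
  case (Suc k)
  have "matmul S (mpow S P (Suc k)) P s t = matmul S P (matmul S (mpow S P k) P) s t"
    using matmul_assoc[OF assms(1)] by simp
  also have "\<dots> = matmul S P (matmul S P (mpow S P k)) s t"
    unfolding matmul_def using Suc.IH[OF _ Suc.prems(2)] by (simp add: matmul_def)
  finally show ?case by simp
qed

lemma sum_nonzero_ex: "sum f A \<noteq> (0::real) \<Longrightarrow> \<exists>x\<in>A. f x \<noteq> 0"
  by (metis sum.neutral)

lemma mpow_nil:
  assumes "finite S" "\<And>s t. s \<in> S \<Longrightarrow> t \<in> S \<Longrightarrow> P s t \<noteq> 0 \<Longrightarrow> r t < (r s :: nat)"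
  shows "s \<in> S \<Longrightarrow> t \<in> S \<Longrightarrow> mpow S P k s t \<noteq> 0 \<Longrightarrow> r t + k \<le> r s"
proof (induction k arbitrary: s)
  case 0
  then show ?case by (auto simp: idmat_def split: if_splits)
next
  case (Suc k)
  from Suc.prems(3) obtain u where u: "u \<in> S" "P s u * mpow S P k u t \<noteq> 0"
    by (auto simp: matmul_def dest!: sum_nonzero_ex)
  then have "r u < r s" using assms(2)[OF Suc.prems(1) u(1)] by auto
  moreover have "r t + k \<le> r u" using Suc.IH[OF u(1) Suc.prems(2)] u by auto
  ultimately show ?case by simp
qed

lemma telesc: "(\<Sum>k<Suc K. f k) - (\<Sum>k<Suc K. f (Suc k)) = f 0 - (f (Suc K) :: real)"
  by (induction K) auto

lemma inv_exists:
  assumes "finite S" "\<And>s t. s \<in> S \<Longrightarrow> t \<in> S \<Longrightarrow> P s t \<noteq> 0 \<Longrightarrow> r t < (r s :: nat)"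
    "\<And>s. s \<in> S \<Longrightarrow> r s \<le> K"
  shows "\<exists>B. (\<forall>s\<in>S. \<forall>t\<in>S. matmul S (\<lambda>s t. idmat s t - P s t) B s t = idmat s t
             \<and> matmul S B (\<lambda>s t. idmat s t - P s t) s t = idmat s t)
           \<and> (\<forall>s t. s \<notin> S \<or> t \<notin> S \<longrightarrow> B s t = 0)"
proof -
  define B where "B = (\<lambda>s t. if s \<in> S \<and> t \<in> S then (\<Sum>k<Suc K. mpow S P k s t) else 0)"
  have z: "mpow S P (Suc K) s t = 0" if "s \<in> S" "t \<in> S" for s t
    using mpow_nil[OF assms(1,2) that, where k="Suc K"] assms(3)[OF that(1)] by fastforce
  have "matmul S (\<lambda>s t. idmat s t - P s t) B s t = idmat s t" if st: "s \<in> S" "t \<in> S" for s t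
  proof -
    have "matmul S (\<lambda>s t. idmat s t - P s t) B s t = B s t - matmul S P B s t"
      using matmul_id_left[OF assms(1) st(1), of B t]
      by (simp add: matmul_def left_diff_distrib sum_subtractf)
    also have "matmul S P B s t = (\<Sum>u\<in>S. P s u * (\<Sum>k<Suc K. mpow S P k u t))"
      unfolding matmul_def B_def using st by (intro sum.cong) auto
    also have "\<dots> = (\<Sum>k<Suc K. \<Sum>u\<in>S. P s u * mpow S P k u t)"
      by (simp only: sum_distrib_left, rule sum.swap)
    also have "\<dots> = (\<Sum>k<Suc K. mpow S P (Suc k) s t)"
      by (simp add: matmul_def del: sum.lessThan_Suc)
    also have "B s t - \<dots> = mpow S P 0 s t - mpow S P (Suc K) s t"
      using st telesc[of "\<lambda>k. mpow S P k s t" K] by (simp add: B_def del: mpow.simps)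
    finally show ?thesis using z[OF st] by simp
  qed
  moreover have "matmul S B (\<lambda>s t. idmat s t - P s t) s t = idmat s t" if st: "s \<in> S" "t \<in> S" for s t
  proof -
    have "matmul S B (\<lambda>s t. idmat s t - P s t) s t = B s t - matmul S B P s t"
      using matmul_id_right[OF assms(1) st(2), of B s]
      by (simp add: matmul_def right_diff_distrib sum_subtractf)
    also have "matmul S B P s t = (\<Sum>u\<in>S. (\<Sum>k<Suc K. mpow S P k s u) * P u t)"
      unfolding matmul_def B_def using st by (intro sum.cong) auto
    also have "\<dots> = (\<Sum>k<Suc K. \<Sum>u\<in>S. mpow S P k s u * P u t)"
      by (simp only: sum_distrib_right, rule sum.swap)
    also have "\<dots> = (\<Sum>k<Suc K. matmul S (mpow S P k) P s t)"
      by (simp add: matmul_def del: sum.lessThan_Suc)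
    also have "\<dots> = (\<Sum>k<Suc K. mpow S P (Suc k) s t)"
      using mpow_comm[OF assms(1) st] by simp
    also have "B s t - \<dots> = mpow S P 0 s t - mpow S P (Suc K) s t"
      using st telesc[of "\<lambda>k. mpow S P k s t" K] by (simp add: B_def del: mpow.simps)
    finally show ?thesis using z[OF st] by simp
  qed
  moreover have "\<forall>s t. s \<notin> S \<or> t \<notin> S \<longrightarrow> B s t = 0" by (auto simp: B_def)
  ultimately show ?thesis by blast
qed

lemma inv_unique:
  assumes "finite S"
    and B1: "\<forall>s\<in>S. \<forall>t\<in>S. matmul S A B1 s t = idmat s t \<and> matmul S B1 A s t = idmat s t"
      "\<forall>s t. s \<notin> S \<or> t \<notin> S \<longrightarrow> B1 s t = 0"
    and B2: "\<forall>s\<in>S. \<forall>t\<in>S. matmul S A B2 s t = idmat s t \<and> matmul S B2 A s t = idmat s t"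
      "\<forall>s t. s \<notin> S \<or> t \<notin> S \<longrightarrow> B2 s t = 0"
  shows "B1 = B2"
proof (intro ext)
  fix s t
  show "B1 s t = B2 s t"
  proof (cases "s \<in> S \<and> t \<in> S")
    case True
    have "matmul S (matmul S B1 A) B2 s t = B2 s t"
      using True B1(1) matmul_id_left[OF assms(1), of s B2 t]
      by (simp add: matmul_def)
    moreover have "matmul S B1 (matmul S A B2) s t = B1 s t"
      using True B2(1) matmul_id_right[OF assms(1), of t B1 s]
      by (simp add: matmul_def)
    ultimately show ?thesis using matmul_assoc[OF assms(1)] by metis
  next
    case False then show ?thesis using B1(2) B2(2) by auto
  qed
qed

lemma matinv_props:
  assumes "finite S" "\<And>s t. s \<in> S \<Longrightarrow> t \<in> S \<Longrightarrow> P s t \<noteq> 0 \<Longrightarrow> r t < (r s :: nat)"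
    "\<And>s. s \<in> S \<Longrightarrow> r s \<le> K"
  shows "\<forall>s\<in>S. \<forall>t\<in>S. matmul S (\<lambda>s t. idmat s t - P s t) (matinv S (\<lambda>s t. idmat s t - P s t)) s t = idmat s t
             \<and> matmul S (matinv S (\<lambda>s t. idmat s t - P s t)) (\<lambda>s t. idmat s t - P s t) s t = idmat s t"
proof -
  let ?A = "\<lambda>s t. idmat s t - P s t"
  let ?Q = "\<lambda>B. (\<forall>s\<in>S. \<forall>t\<in>S. matmul S ?A B s t = idmat s t \<and> matmul S B ?A s t = idmat s t)
                       \<and> (\<forall>s t. s \<notin> S \<or> t \<notin> S \<longrightarrow> B s t = 0)"
  have "\<exists>!B. ?Q B"
    using inv_exists[of S P r K, OF assms] inv_unique[OF assms(1)] by blast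
  then have "?Q (THE B. ?Q B)" by (rule theI')
  then show ?thesis unfolding matinv_def by blast
qed




lemma mem_Some: "Some (a, b) \<in> typesS h \<longleftrightarrow> 1 \<le> a \<and> 1 \<le> b \<and> a + b \<le> h"
  by (auto simp: typesS_def)

lemma None_mem: "None \<in> typesS h"
  by (auto simp: typesS_def)

lemma finite_typesS: "finite (typesS h)"
proof -
  have "typesS h \<subseteq> insert None (Some ` ({0..h} \<times> {0..h}))"
    by (auto simp: typesS_def)
  then show ?thesis by (rule finite_subset) auto
qed

definition rk :: "(nat \<times> nat) option \<Rightarrow> nat" where
  "rk x = (case x of None \<Rightarrow> 0 | Some (a, b) \<Rightarrow> 2 * a + b)"

lemma P_rank: "Pmat lL g s t \<noteq> 0 \<Longrightarrow> rk t < rk s"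
  by (auto simp: Pmat_def rk_def split: option.splits if_splits)

lemma rk_bound: "s \<in> typesS h \<Longrightarrow> rk s \<le> 2 * h"
  by (auto simp: typesS_def rk_def)

definition PhiL :: "real \<Rightarrow> real \<Rightarrow> (nat \<times> nat) option \<Rightarrow> (nat \<times> nat) option \<Rightarrow> real" where
  "PhiL lL g s t = (case s of None \<Rightarrow> 0
     | Some (a, b) \<Rightarrow>
        (if 1 < a \<and> t = Some (a - 1, b + 1) then real a * lL / (real b * (real a * lL + g)) else 0)
      + (if a = 1 \<and> t = None then lL / (real b * (lL + g)) else 0))"

definition phig :: "real \<Rightarrow> real \<Rightarrow> real \<Rightarrow> (nat \<times> nat) option \<Rightarrow> real" where
  "phig lG lL g s = (case s of None \<Rightarrow> lG / g | Some (a, b) \<Rightarrow> lG / (real b * (real a * lL + g)))"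

lemma Phimat_dec: "Phimat h lG lL g u t = PhiL lL g u t + (if t = Some (h - 1, 1) then phig lG lL g u else 0)"
  by (cases u) (auto simp: Phimat_def PhiL_def phig_def)

lemma PhiL_e0: "PhiL lL g u (Some (c, 1)) = 0"
  by (cases u) (auto simp: PhiL_def)

lemma sum_if_eq:
  assumes "finite A"
  shows "(\<Sum>w\<in>A. (if w = X then c else 0) * f w) = (if X \<in> A then c * f X else (0::real))"
proof -
  have "(\<Sum>w\<in>A. (if w = X then c else 0) * f w) = (\<Sum>w\<in>A. (if w = X then c * f X else 0))"
    by (rule sum.cong) auto
  then show ?thesis using assms by simp
qed

lemma Pmat_Some_eq: "Pmat lL g (Some (a, b)) w =
    (if w = Some (a - 1, b + 1) then (if 1 < a then real a * lL / (real a * lL + g) else 0) else 0)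
  + (if w = None then (if a = 1 then lL / (lL + g) else 0) else 0)
  + (if w = Some (a, b - 1) then (if 2 \<le> b then (real b - 1) * g / (real b * (real a * lL + g)) else 0) else 0)"
  by (auto simp: Pmat_def)

lemma PhiL_Some_eq: "PhiL lL g (Some (a, b)) w =
    (if w = Some (a - 1, b + 1) then (if 1 < a then real a * lL / (real b * (real a * lL + g)) else 0) else 0)
  + (if w = None then (if a = 1 then lL / (real b * (lL + g)) else 0) else 0)"
  by (auto simp: PhiL_def)

lemma sumP:
  assumes "1 \<le> a" "1 \<le> b" "a + b \<le> h"
  shows "(\<Sum>w\<in>typesS h. Pmat lL g (Some (a, b)) w * f w) =
     (if 1 < a then real a * lL / (real a * lL + g) * f (Some (a - 1, b + 1)) else 0)
   + (if a = 1 then lL / (lL + g) * f None else 0)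
   + (if 2 \<le> b then (real b - 1) * g / (real b * (real a * lL + g)) * f (Some (a, b - 1)) else 0)"
proof -
  have m1: "1 < a \<Longrightarrow> Some (a - 1, b + 1) \<in> typesS h" using assms by (simp add: mem_Some)
  have m2: "2 \<le> b \<Longrightarrow> Some (a, b - 1) \<in> typesS h" using assms unfolding mem_Some by arith
  show ?thesis
  unfolding Pmat_Some_eq distrib_right sum.distrib sum_if_eq[OF finite_typesS]
  using m1 m2 by (simp add: None_mem)
qed

lemma sumPhiL:
  assumes "1 \<le> a" "1 \<le> b" "a + b \<le> h"
  shows "(\<Sum>w\<in>typesS h. PhiL lL g (Some (a, b)) w * f w) =
     (if 1 < a then real a * lL / (real b * (real a * lL + g)) * f (Some (a - 1, b + 1)) else 0)
   + (if a = 1 then lL / (real b * (lL + g)) * f None else 0)"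
proof -
  have m1: "1 < a \<Longrightarrow> Some (a - 1, b + 1) \<in> typesS h" using assms by (simp add: mem_Some)
  show ?thesis
  unfolding PhiL_Some_eq distrib_right sum.distrib sum_if_eq[OF finite_typesS]
  using m1 by (simp add: None_mem)
qed

lemma sum_idmat: "finite A \<Longrightarrow> u \<in> A \<Longrightarrow> (\<Sum>w\<in>A. idmat u w) = 1"
  by (simp add: idmat_def)

lemma arith1: "(x::real) > 0 \<Longrightarrow> bb > 0 \<Longrightarrow> x = y + g \<Longrightarrow>
   1 - (y / x + (bb - 1) * g / (bb * x)) = g / (bb * x)"
proof -
  assume a: "x > 0" "bb > 0" "x = y + g"
  then have y: "y = x - g" by simp
  show ?thesis unfolding y using a(1,2) by (simp add: field_simps)
qed

lemma rowsum:
  assumes "0 < lL" "0 < g" "u \<in> typesS h"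
  shows "phig lG lL g u = lG / g * (\<Sum>w\<in>typesS h. idmat u w - Pmat lL g u w)"
proof (cases u)
  case None
  then show ?thesis using assms by (simp add: phig_def Pmat_def sum_idmat finite_typesS)
next
  case (Some p)
  then obtain a b where u: "u = Some (a, b)" by (cases p) auto
  with assms have ab: "1 \<le> a" "1 \<le> b" "a + b \<le> h" by (auto simp: mem_Some)
  have sP: "(\<Sum>w\<in>typesS h. Pmat lL g u w) =
     (if 1 < a then real a * lL / (real a * lL + g) else 0)
   + (if a = 1 then lL / (lL + g) else 0)
   + (if 2 \<le> b then (real b - 1) * g / (real b * (real a * lL + g)) else 0)"
    using sumP[OF ab, of lL g "\<lambda>_. 1"] u by simp
  have "(\<Sum>w\<in>typesS h. idmat u w - Pmat lL g u w) = 1 - (\<Sum>w\<in>typesS h. Pmat lL g u w)"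
    using assms(3) by (simp add: sum_subtractf sum_idmat finite_typesS)
  also have "\<dots> = g / (real b * (real a * lL + g))"
  proof -
    have pos: "0 < real a * lL + g" using assms ab by (simp add: add_pos_pos)
    have "a = 1 \<or> 1 < a" using ab by auto
    moreover have "b = 1 \<or> 2 \<le> b" using ab by auto
    have d1: "real b * (real a * lL + g) \<noteq> 0" using pos ab by simp
    have d2: "lL + g \<noteq> 0" using assms by simp
    have d3: "real b * (lL + g) \<noteq> 0" using d2 ab by simp
    have sP2: "(\<Sum>w\<in>typesS h. Pmat lL g u w) = real a * lL / (real a * lL + g)
       + (if 2 \<le> b then (real b - 1) * g / (real b * (real a * lL + g)) else 0)"
      unfolding sP using ab by (cases "a = 1") auto
    have bpos: "0 < real b" using ab by simp
    show ?thesis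
    proof (cases "b = 1")
      case True
      then show ?thesis unfolding sP2 using pos by (simp add: field_simps)
    next
      case False
      then show ?thesis unfolding sP2 using ab arith1[OF pos bpos, of "real a * lL" g] by simp
    qed
  qed
  finally show ?thesis using u assms by (simp add: phig_def)
qed




locale hh =
  fixes h :: nat and lG lL g :: real
  assumes h2: "2 \<le> h" and pG: "0 < lG" and pL: "0 < lL" and pg: "0 < g"
begin

abbreviation "SS \<equiv> typesS h"
abbreviation "e0 \<equiv> Some (h - 1, 1::nat)"
abbreviation "AA \<equiv> (\<lambda>s t. idmat s t - Pmat lL g s t)"

definition "Bm = matinv SS AA"
definition "Lm = matmul SS Bm (PhiL lL g)"
definition "Lp = mpow SS Lm"
definition "Dk k x = (\<Sum>t\<in>SS. Lp k x t)"
definition "Dh k s b = Dk k (if s = 0 then None else Some (s, b))"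

lemma finS: "finite SS" by (rule finite_typesS)

lemma e0_mem: "e0 \<in> SS" using h2 by (simp add: mem_Some)

lemma invB: "\<forall>s\<in>SS. \<forall>t\<in>SS. matmul SS AA Bm s t = idmat s t \<and> matmul SS Bm AA s t = idmat s t"
  unfolding Bm_def
  by (rule matinv_props[OF finS, of "Pmat lL g" rk "2 * h"]) (auto intro: P_rank rk_bound)

lemma AB: "s \<in> SS \<Longrightarrow> t \<in> SS \<Longrightarrow> matmul SS AA Bm s t = idmat s t" using invB by blast
lemma BA: "s \<in> SS \<Longrightarrow> t \<in> SS \<Longrightarrow> matmul SS Bm AA s t = idmat s t" using invB by blast

lemma L_rec:
  assumes s: "s \<in> SS"
  shows "Lm s t = matmul SS (Pmat lL g) Lm s t + PhiL lL g s t"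
proof -
  have "matmul SS AA Lm s t = matmul SS (matmul SS AA Bm) (PhiL lL g) s t"
    unfolding Lm_def using matmul_assoc[OF finS] by simp
  also have "\<dots> = (\<Sum>u\<in>SS. matmul SS AA Bm s u * PhiL lL g u t)"
    by (simp only: matmul_def[of SS "matmul SS AA Bm" "PhiL lL g"])
  also have "\<dots> = (\<Sum>u\<in>SS. idmat s u * PhiL lL g u t)"
    using AB[OF s] by (intro sum.cong) auto
  also have "\<dots> = PhiL lL g s t" using matmul_id_left[OF finS s] by (simp add: matmul_def)
  finally have 1: "matmul SS AA Lm s t = PhiL lL g s t" .
  have "matmul SS AA Lm s t = matmul SS idmat Lm s t - matmul SS (Pmat lL g) Lm s t"
    unfolding matmul_def by (simp add: left_diff_distrib sum_subtractf)
  also have "\<dots> = Lm s t - matmul SS (Pmat lL g) Lm s t"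
    using matmul_id_left[OF finS s] by simp
  finally show ?thesis using 1 by simp
qed

lemma Bphig: "s \<in> SS \<Longrightarrow> (\<Sum>u\<in>SS. Bm s u * phig lG lL g u) = lG / g"
proof -
  assume s: "s \<in> SS"
  have "(\<Sum>u\<in>SS. Bm s u * phig lG lL g u) = (\<Sum>u\<in>SS. Bm s u * (lG / g * (\<Sum>w\<in>SS. AA u w)))"
    using rowsum[OF pL pg] by (intro sum.cong) auto
  also have "\<dots> = lG / g * (\<Sum>w\<in>SS. \<Sum>u\<in>SS. Bm s u * AA u w)"
    by (simp add: sum_distrib_left mult.left_commute, rule sum.swap)
  also have "\<dots> = lG / g * (\<Sum>w\<in>SS. idmat s w)"
    using BA[OF s] unfolding matmul_def by simp
  also have "\<dots> = lG / g" using sum_idmat[OF finS s] by simp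
  finally show ?thesis .
qed

lemma M_dec:
  assumes s: "s \<in> SS"
  shows "Mmat h lG lL g s t = Lm s t + (if t = e0 then lG / g else 0)"
proof -
  have "Mmat h lG lL g s t = (\<Sum>u\<in>SS. Bm s u * (PhiL lL g u t + (if t = e0 then phig lG lL g u else 0)))"
    unfolding Mmat_def matmul_def Bm_def[symmetric] Phimat_dec ..
  also have "\<dots> = Lm s t + (if t = e0 then (\<Sum>u\<in>SS. Bm s u * phig lG lL g u) else 0)"
    unfolding Lm_def matmul_def by (simp add: distrib_left sum.distrib)
  finally show ?thesis using Bphig[OF s] by simp
qed

lemma L_e0: "Lm s e0 = 0"
proof -
  have "\<And>u. PhiL lL g u e0 = 0" by (rule PhiL_e0)
  then show ?thesis unfolding Lm_def matmul_def by simp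
qed

lemma L_None: "Lm None t = 0"
proof -
  have "Lm None t = matmul SS (Pmat lL g) Lm None t + PhiL lL g None t"
    by (rule L_rec[OF None_mem])
  then show ?thesis by (simp add: matmul_def Pmat_def PhiL_def)
qed

lemma Lp_comm: "x \<in> SS \<Longrightarrow> t \<in> SS \<Longrightarrow> matmul SS (Lp k) Lm x t = Lp (Suc k) x t"
  unfolding Lp_def using mpow_comm[OF finS] by simp

lemma D_Suc: "Dk (Suc k) x = (\<Sum>u\<in>SS. Lm x u * Dk k u)"
  unfolding Dk_def Lp_def by (simp add: matmul_def sum_distrib_left, rule sum.swap)

lemma D_0: "x \<in> SS \<Longrightarrow> Dk 0 x = 1"
  unfolding Dk_def Lp_def using sum_idmat[OF finS] by simp

lemma D_None: "Dk (Suc k) None = 0"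
  unfolding D_Suc L_None by simp

lemma D_rec:
  assumes x: "x \<in> SS"
  shows "Dk (Suc k) x = (\<Sum>w\<in>SS. Pmat lL g x w * Dk (Suc k) w) + (\<Sum>u\<in>SS. PhiL lL g x u * Dk k u)"
proof -
  have "Dk (Suc k) x = (\<Sum>u\<in>SS. ((\<Sum>w\<in>SS. Pmat lL g x w * Lm w u) + PhiL lL g x u) * Dk k u)"
    unfolding D_Suc using L_rec[OF x] by (simp add: matmul_def)
  also have "\<dots> = (\<Sum>u\<in>SS. \<Sum>w\<in>SS. Pmat lL g x w * Lm w u * Dk k u) + (\<Sum>u\<in>SS. PhiL lL g x u * Dk k u)"
    by (simp add: distrib_right sum.distrib sum_distrib_right)
  also have "(\<Sum>u\<in>SS. \<Sum>w\<in>SS. Pmat lL g x w * Lm w u * Dk k u) = (\<Sum>w\<in>SS. Pmat lL g x w * Dk (Suc k) w)"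
    unfolding D_Suc by (simp add: sum_distrib_left mult.assoc, rule sum.swap)
  finally show ?thesis .
qed

end



context hh begin

lemma Some_mem: "1 \<le> s \<Longrightarrow> 1 \<le> B \<Longrightarrow> s + B \<le> h \<Longrightarrow> Some (s, B) \<in> SS"
  by (simp add: mem_Some)

lemma Dh_None: "Dh (Suc k) 0 B = 0"
  unfolding Dh_def by (simp add: D_None)

lemma Dh_0: "s = 0 \<or> (1 \<le> B \<and> s + B \<le> h) \<Longrightarrow> Dh 0 s B = 1"
  unfolding Dh_def using D_0 None_mem Some_mem by auto

lemma Dh_rec:
  assumes "1 \<le> s" "1 \<le> B" "s + B \<le> h"
  shows "Dh (Suc k) s B = real s * lL / (real s * lL + g) * Dh (Suc k) (s - 1) (B + 1)
     + real s * lL / (real B * (real s * lL + g)) * Dh k (s - 1) (B + 1)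
     + (real B - 1) * g / (real B * (real s * lL + g)) * Dh (Suc k) s (B - 1)"
proof -
  have mem: "Some (s, B) \<in> SS" using Some_mem assms by simp
  have "Dh (Suc k) s B = Dk (Suc k) (Some (s, B))" unfolding Dh_def using assms by simp
  also have "\<dots> = (if 1 < s then real s * lL / (real s * lL + g) * Dk (Suc k) (Some (s - 1, B + 1)) else 0)
   + (if s = 1 then lL / (lL + g) * Dk (Suc k) None else 0)
   + (if 2 \<le> B then (real B - 1) * g / (real B * (real s * lL + g)) * Dk (Suc k) (Some (s, B - 1)) else 0)
   + ((if 1 < s then real s * lL / (real B * (real s * lL + g)) * Dk k (Some (s - 1, B + 1)) else 0)
   + (if s = 1 then lL / (real B * (lL + g)) * Dk k None else 0))"
    unfolding D_rec[OF mem] sumP[OF assms] sumPhiL[OF assms] ..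
  also have "\<dots> = real s * lL / (real s * lL + g) * Dh (Suc k) (s - 1) (B + 1)
     + real s * lL / (real B * (real s * lL + g)) * Dh k (s - 1) (B + 1)
     + (real B - 1) * g / (real B * (real s * lL + g)) * Dh (Suc k) s (B - 1)"
  proof -
    have "s = 1 \<or> 1 < s" using assms by auto
    moreover have "B = 1 \<or> 2 \<le> B" using assms by auto
    ultimately show ?thesis unfolding Dh_def using assms by (auto simp: D_None)
  qed
  finally show ?thesis .
qed

lemma Dh_zero: "s < k \<Longrightarrow> 1 \<le> B \<Longrightarrow> s + B \<le> h \<Longrightarrow> Dh k s B = 0"
proof (induction "2 * s + B" arbitrary: s B k rule: less_induct)
  case less
  then obtain k' where k: "k = Suc k'" by (cases k) auto
  show ?case
  proof (cases "s = 0")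
    case True
    then show ?thesis using k Dh_None by simp
  next
    case False
    have t1: "Dh (Suc k') (s - 1) (B + 1) = 0"
      using less.hyps[of "s - 1" "B + 1" "Suc k'"] less.prems False k by simp
    have t2: "Dh k' (s - 1) (B + 1) = 0"
      using less.hyps[of "s - 1" "B + 1" "k'"] less.prems False k by simp
    have t3: "(real B - 1) * g / (real B * (real s * lL + g)) * Dh (Suc k') s (B - 1) = 0"
    proof (cases "B = 1")
      case True then show ?thesis by simp
    next
      case False
      then have "Dh (Suc k') s (B - 1) = 0"
        using less.hyps[of s "B - 1" "Suc k'"] less.prems k by simp
      then show ?thesis by simp
    qed
    have "Dh (Suc k') s B = real s * lL / (real s * lL + g) * Dh (Suc k') (s - 1) (B + 1)
     + real s * lL / (real B * (real s * lL + g)) * Dh k' (s - 1) (B + 1)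
     + (real B - 1) * g / (real B * (real s * lL + g)) * Dh (Suc k') s (B - 1)"
      using False less.prems by (intro Dh_rec) auto
    then show ?thesis unfolding k using t1 t2 t3 by simp
  qed
qed

end



lemma sum_upd:
  assumes "k < length c"
  shows "(\<Sum>m<length c. real (c[k := v] ! m) * f m) =
         (\<Sum>m<length c. real (c ! m) * f m) + (real v - real (c ! k)) * f k"
proof -
  have "(\<Sum>m<length c. real (c[k := v] ! m) * f m) =
        (\<Sum>m<length c. real (c ! m) * f m + (if m = k then (real v - real (c ! k)) * f k else 0))"
    using assms by (intro sum.cong) (auto simp: nth_list_update algebra_simps)
  also have "\<dots> = (\<Sum>m<length c. real (c ! m) * f m) + (real v - real (c ! k)) * f k"
    using assms by (simp add: sum.distrib)
  finally show ?thesis .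
qed

lemma sum_list_real: "real (sum_list c) = (\<Sum>m<length c. real (c ! m))"
  by (simp add: sum_list_sum_nth atLeast0LessThan)

context hh begin

definition "ginv s c = ((\<forall>j<length c. 0 < c ! j \<longrightarrow> s + j + 1 \<le> length c) \<and> s + sum_list c \<le> h)"
definition "dd i s b m = (if m < i then Dh (i - m) s b else 0)"

lemma coeffs:
  assumes "0 < B" "0 < s"
  defines "R \<equiv> real B * (lL * real s + g)"
  shows "lL * real s / R * real B = real s * lL / (real s * lL + g)"
    and "lL * real s / R = real s * lL / (real B * (real s * lL + g))"
    and "g / R * real B - g / R = (real B - 1) * g / (real B * (real s * lL + g))"
proof -
  have p: "0 < real s * lL + g" using assms pL pg by (simp add: add_pos_pos)
  have R: "R = real B * (real s * lL + g)" unfolding R_def by (simp add: mult.commute)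
  have d: "real B * (real s * lL + g) \<noteq> 0" using p assms by simp
  show "lL * real s / R * real B = real s * lL / (real s * lL + g)"
    unfolding R using p d assms by (simp add: field_simps)
  show "lL * real s / R = real s * lL / (real B * (real s * lL + g))"
    unfolding R using p d assms by (simp add: field_simps)
  have "(real B - 1) * g / R = (real B * g - g) / R" by (simp add: left_diff_distrib)
  also have "\<dots> = real B * g / R - g / R" by (rule diff_divide_distrib)
  finally show "g / R * real B - g / R = (real B - 1) * g / (real B * (real s * lL + g))"
    unfolding R by simp
qed

lemma pointwise:
  assumes "0 < B" "s + B \<le> h"
  defines "R \<equiv> real B * (lL * real s + g)"
  shows "lL * real s / R * real B * dd i (s - 1) (B + 1) m
       + lL * real s / R * (if m < i then Dh (i - Suc m) (s - 1) (B + 1) else 0)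
       + (g / R * real B - g / R) * dd i s (B - 1) m = dd i s B m"
proof (cases "m < i")
  case False then show ?thesis by (simp add: dd_def)
next
  case True
  then obtain k where k: "i - m = Suc k" by (cases "i - m") auto
  then have k2: "i - Suc m = k" by simp
  show ?thesis
  proof (cases "s = 0")
    case True
    then show ?thesis using k by (simp add: dd_def Dh_None \<open>m < i\<close>)
  next
    case False
    have "Dh (Suc k) s B = real s * lL / (real s * lL + g) * Dh (Suc k) (s - 1) (B + 1)
     + real s * lL / (real B * (real s * lL + g)) * Dh k (s - 1) (B + 1)
     + (real B - 1) * g / (real B * (real s * lL + g)) * Dh (Suc k) s (B - 1)"
      using False assms by (intro Dh_rec) auto
    then show ?thesis using \<open>m < i\<close> k k2 coeffs[of B s] False assms(1)
      unfolding R_def dd_def by simp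
  qed
qed

lemma genF_D:
  "ginv s c \<Longrightarrow> genF lL g i s c = (\<Sum>m<length c. real (c ! m) * dd i s (sum_list c) m)"
proof (induction "2 * s + sum_list c" arbitrary: s c rule: less_induct)
  case less
  define B where "B = sum_list c"
  define n where "n = length c"
  show ?case
  proof (cases "B = 0")
    case True
    then have z: "\<forall>m<n. c ! m = 0" unfolding B_def n_def by (auto simp: sum_list_eq_0_iff)
    have sc0: "sum_list c = 0" using True B_def by simp
    have "genF lL g i s c = 0" by (subst genF.simps) (simp only: sc0 simp_thms if_True)
    moreover have "(\<Sum>m<length c. real (c ! m) * dd i s (sum_list c) m) = 0"
      using z unfolding n_def by simp
    ultimately show ?thesis by simp
  next
    case False
    have Bpos: "0 < B" using False by simp
    define R where "R = real B * (lL * real s + g)"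
    define a1 where "a1 = lL * real s / R"
    define a2 where "a2 = g / R"
    define S1 where "S1 = (\<Sum>m<n. real (c ! m) * dd i (s - 1) (B + 1) m)"
    define S2 where "S2 = (\<Sum>m<n. real (c ! m) * dd i s (B - 1) m)"
    define ee where "ee j = (if j < i then Dh (i - Suc j) (s - 1) (B + 1) else 0)" for j
    have inv1: "\<forall>j<n. 0 < c ! j \<longrightarrow> s + j + 1 \<le> n" and inv2: "s + B \<le> h"
      using less.prems unfolding ginv_def B_def n_def by auto
    have gen: "genF lL g i s c =
      (\<Sum>j<n. real (c ! j) * lL * real s / R * ((if Suc j = i then 1 else 0) +
             (if 0 < s \<and> 0 < c ! j then genF lL g i (s - 1) (c[Suc j := c ! Suc j + 1]) else 0)))
      + (\<Sum>j<n. real (c ! j) * g / R * (if 0 < c ! j then genF lL g i s (c[j := c ! j - 1]) else 0))"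
    proof -
      have sc: "sum_list c \<noteq> 0" using False B_def by simp
      show ?thesis unfolding R_def B_def n_def by (subst genF.simps) (simp only: sc if_False Let_def)
    qed
    have st1: "real (c ! j) * lL * real s / R * ((if Suc j = i then 1 else 0) +
             (if 0 < s \<and> 0 < c ! j then genF lL g i (s - 1) (c[Suc j := c ! Suc j + 1]) else 0))
           = real (c ! j) * (a1 * (S1 + ee j))" if j: "j < n" for j
    proof (cases "s = 0 \<or> c ! j = 0")
      case True then show ?thesis unfolding a1_def by auto
    next
      case False
      then have sj: "0 < s" "0 < c ! j" by auto
      have jn: "Suc j < n" using inv1 j sj by auto
      define c' where "c' = c[Suc j := c ! Suc j + 1]"
      have len: "length c' = n" unfolding c'_def n_def by simp
      have sc': "sum_list c' = B + 1" unfolding c'_def B_def using jn sum_list_update[of "Suc j" c]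
        unfolding n_def by simp
      have inv': "ginv (s - 1) c'"
        unfolding ginv_def
      proof (intro conjI allI impI)
        fix m assume m: "m < length c'" "0 < c' ! m"
        show "s - 1 + m + 1 \<le> length c'"
        proof (cases "m = Suc j")
          case True then show ?thesis using inv1 j sj len by auto
        next
          case False
          then have "c' ! m = c ! m" unfolding c'_def by simp
          then show ?thesis using inv1 m len by force
        qed
      next
        show "s - 1 + sum_list c' \<le> h" using sc' inv2 sj by simp
      qed
      have lt: "2 * (s - 1) + sum_list c' < 2 * s + sum_list c" using sc' sj unfolding B_def by simp
      have IH: "genF lL g i (s - 1) c' = (\<Sum>m<n. real (c' ! m) * dd i (s - 1) (B + 1) m)"
        using less.hyps[OF lt inv'] sc' len by simp
      also have "\<dots> = S1 + dd i (s - 1) (B + 1) (Suc j)"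
        unfolding c'_def S1_def n_def using sum_upd[of "Suc j" c] jn unfolding n_def by simp
      finally have IH2: "genF lL g i (s - 1) c' = S1 + dd i (s - 1) (B + 1) (Suc j)" .
      have "(if Suc j = i then 1 else 0) + dd i (s - 1) (B + 1) (Suc j) = ee j"
      proof -
        have "Dh 0 (s - 1) (B + 1) = 1" using inv2 sj by (intro Dh_0) auto
        then show ?thesis unfolding dd_def ee_def by auto
      qed
      then show ?thesis using IH2 sj unfolding c'_def a1_def by (simp add: algebra_simps)
    qed
    have st2: "real (c ! j) * g / R * (if 0 < c ! j then genF lL g i s (c[j := c ! j - 1]) else 0)
           = real (c ! j) * (a2 * (S2 - dd i s (B - 1) j))" if j: "j < n" for j
    proof (cases "c ! j = 0")
      case True then show ?thesis by simp
    next
      case False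
      then have cj: "0 < c ! j" by auto
      define c' where "c' = c[j := c ! j - 1]"
      have len: "length c' = n" unfolding c'_def n_def by simp
      have le: "c ! j \<le> B" unfolding B_def using elem_le_sum_list[of j c] j unfolding n_def by simp
      have sc': "sum_list c' = B - 1" unfolding c'_def B_def using j sum_list_update[of j c] le cj
        unfolding n_def B_def by simp
      have inv': "ginv s c'"
        unfolding ginv_def
      proof (intro conjI allI impI)
        fix m assume m: "m < length c'" "0 < c' ! m"
        then have "0 < c ! m" unfolding c'_def by (cases "m = j") auto
        then show "s + m + 1 \<le> length c'" using inv1 m len by force
      next
        show "s + sum_list c' \<le> h" using sc' inv2 by simp
      qed
      have lt: "2 * s + sum_list c' < 2 * s + sum_list c" using sc' Bpos unfolding B_def by simp
      have "genF lL g i s c' = (\<Sum>m<n. real (c' ! m) * dd i s (B - 1) m)"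
        using less.hyps[OF lt inv'] sc' len by simp
      also have "\<dots> = S2 + (real (c ! j - 1) - real (c ! j)) * dd i s (B - 1) j"
        unfolding c'_def S2_def n_def using sum_upd[of j c] j unfolding n_def by simp
      also have "\<dots> = S2 - dd i s (B - 1) j" using cj by (simp add: of_nat_diff)
      finally show ?thesis using cj unfolding c'_def a2_def by simp
    qed
    have "genF lL g i s c = (\<Sum>j<n. real (c ! j) * (a1 * (S1 + ee j)))
          + (\<Sum>j<n. real (c ! j) * (a2 * (S2 - dd i s (B - 1) j)))"
      unfolding gen using st1 st2 by simp
    also have "\<dots> = a1 * S1 * (\<Sum>j<n. real (c ! j)) + a1 * (\<Sum>j<n. real (c ! j) * ee j)
          + a2 * S2 * (\<Sum>j<n. real (c ! j)) - a2 * (\<Sum>j<n. real (c ! j) * dd i s (B - 1) j)"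
      by (simp add: algebra_simps sum.distrib sum_subtractf sum_distrib_left sum_distrib_right)
    also have "(\<Sum>j<n. real (c ! j)) = real B" unfolding B_def n_def by (simp add: sum_list_real)
    also have "a1 * S1 * real B + a1 * (\<Sum>j<n. real (c ! j) * ee j)
          + a2 * S2 * real B - a2 * (\<Sum>j<n. real (c ! j) * dd i s (B - 1) j)
        = (\<Sum>m<n. real (c ! m) * (a1 * real B * dd i (s - 1) (B + 1) m + a1 * ee m
             + (a2 * real B - a2) * dd i s (B - 1) m))"
      unfolding S1_def S2_def
      by (simp add: algebra_simps sum.distrib sum_subtractf sum_distrib_left sum_distrib_right)
    also have "\<dots> = (\<Sum>m<n. real (c ! m) * dd i s B m)"
    proof (intro sum.cong refl)
      fix m
      have "a1 * real B * dd i (s - 1) (B + 1) m + a1 * ee m + (a2 * real B - a2) * dd i s (B - 1) m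
          = dd i s B m"
        using pointwise[of B s i m] False inv2 unfolding a1_def a2_def R_def ee_def by simp
      then show "real (c ! m) * (a1 * real B * dd i (s - 1) (B + 1) m + a1 * ee m
             + (a2 * real B - a2) * dd i s (B - 1) m) = real (c ! m) * dd i s B m" by simp
    qed
    finally show ?thesis unfolding B_def n_def .
  qed
qed

end



declare xgen.simps[simp del]

lemma xgen_j:
  assumes "j < h" "muf 0 = 1"
  shows "xgen h muG muf n j = (if j \<le> n then muf j * xgen h muG muf (n - j) 0 else 0)"
proof (cases "j = 0")
  case True then show ?thesis using assms by simp
next
  case False
  then show ?thesis using assms by (subst xgen.simps) (simp del: xgen.simps)
qed

lemma swap1: "(\<Sum>s\<in>A. (\<Sum>i\<in>I. a i * p i s) * q s) = (\<Sum>i\<in>I. a i * (\<Sum>s\<in>A. p i s * (q s::real)))"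
  by (simp add: sum_distrib_left sum_distrib_right mult.assoc) (rule sum.swap)

lemma swap2: "(\<Sum>s\<in>A. \<Sum>i\<in>I. a i * p i s) = (\<Sum>i\<in>I. a i * (\<Sum>s\<in>A. (p i s::real)))"
  by (simp add: sum_distrib_left) (rule sum.swap)

context hh begin

lemma Lp0: "Lp 0 = idmat" by (simp add: Lp_def)

abbreviation "X m \<equiv> xgen h (lG / g) (mu lL g h) m 0"

lemma mu_D: "Dk i e0 = (if i < h then mu lL g h i else 0)"
proof (cases "i = 0")
  case True
  then show ?thesis using h2 D_0[OF e0_mem] by (simp add: mu_def)
next
  case False
  define c where "c = (1::nat) # replicate (h - 1) 0"
  have len: "length c = h" unfolding c_def using h2 by simp
  have sc: "sum_list c = 1" unfolding c_def by simp
  have inv: "ginv (h - 1) c" unfolding ginv_def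
  proof (intro conjI allI impI)
    fix j assume "j < length c" "0 < c ! j"
    then have "j = 0" unfolding c_def by (cases j) auto
    then show "h - 1 + j + 1 \<le> length c" using len h2 by simp
  next
    show "h - 1 + sum_list c \<le> h" using sc h2 by simp
  qed
  have "genF lL g i (h - 1) c = (\<Sum>m<length c. real (c ! m) * dd i (h - 1) 1 m)"
    using genF_D[OF inv] sc by simp
  also have "\<dots> = (\<Sum>m<Suc (h - 1). real (c ! m) * dd i (h - 1) 1 m)" using len h2 by simp
  also have "\<dots> = dd i (h - 1) 1 0"
    unfolding sum.lessThan_Suc_shift unfolding c_def by simp
  also have "\<dots> = Dk i e0" unfolding dd_def Dh_def using False h2 by simp
  finally have g1: "genF lL g i (h - 1) c = Dk i e0" .
  show ?thesis
  proof (cases "i < h")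
    case True then show ?thesis using g1 False unfolding mu_def c_def by simp
  next
    case F2: False
    have "Dh i (h - 1) 1 = 0" using F2 h2 by (intro Dh_zero) auto
    then show ?thesis using F2 h2 unfolding Dh_def by simp
  qed
qed

lemma xsum: "(\<Sum>i\<le>n. X (n - i) * Dk i e0) = (\<Sum>j<h. xgen h (lG / g) (mu lL g h) n j)"
proof -
  have m0: "mu lL g h 0 = 1" by (simp add: mu_def)
  have "(\<Sum>i\<le>n. X (n - i) * Dk i e0) = (\<Sum>i\<le>n. if i < h then mu lL g h i * X (n - i) else 0)"
    unfolding mu_D by (intro sum.cong) auto
  also have "\<dots> = (\<Sum>i\<in>{i\<in>{..n}. i < h}. mu lL g h i * X (n - i))"
    by (subst sum.inter_filter) auto
  also have "{i\<in>{..n}. i < h} = {j\<in>{..<h}. j \<le> n}" by auto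
  also have "(\<Sum>i\<in>{j\<in>{..<h}. j \<le> n}. mu lL g h i * X (n - i))
      = (\<Sum>j<h. if j \<le> n then mu lL g h j * X (n - j) else 0)"
    by (subst sum.inter_filter) auto
  also have "\<dots> = (\<Sum>j<h. xgen h (lG / g) (mu lL g h) n j)"
  proof (intro sum.cong refl)
    fix j assume "j \<in> {..<h}"
    then show "(if j \<le> n then mu lL g h j * X (n - j) else 0) = xgen h (lG / g) (mu lL g h) n j"
      by (subst xgen_j) (simp_all add: m0)
  qed
  finally show ?thesis .
qed

lemma y_dec: "t \<in> SS \<Longrightarrow> yvec h lG lL g n t = (\<Sum>i\<le>n. X (n - i) * Lp i e0 t)"
proof (induction n arbitrary: t)
  case 0
  have "X 0 = 1" by (simp add: xgen.simps)
  then show ?case by (simp add: Lp0 idmat_def)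
next
  case (Suc n)
  have "yvec h lG lL g (Suc n) t = (\<Sum>s\<in>SS. (\<Sum>i\<le>n. X (n - i) * Lp i e0 s) * (Lm s t + (if t = e0 then lG / g else 0)))"
    using Suc.IH M_dec by simp
  also have "\<dots> = (\<Sum>i\<le>n. X (n - i) * (\<Sum>s\<in>SS. Lp i e0 s * Lm s t))
       + (if t = e0 then lG / g else 0) * (\<Sum>i\<le>n. X (n - i) * (\<Sum>s\<in>SS. Lp i e0 s))"
    by (simp only: distrib_left sum.distrib swap1 mult.commute[of _ "if t = e0 then lG / g else 0"]
        sum_distrib_left[symmetric] swap2)
  also have "(\<Sum>i\<le>n. X (n - i) * (\<Sum>s\<in>SS. Lp i e0 s * Lm s t)) = (\<Sum>i\<le>n. X (n - i) * Lp (Suc i) e0 t)"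
    using Lp_comm[OF e0_mem Suc.prems] by (simp add: matmul_def)
  also have "(\<Sum>i\<le>n. X (n - i) * (\<Sum>s\<in>SS. Lp i e0 s)) = (\<Sum>j<h. xgen h (lG / g) (mu lL g h) n j)"
    using xsum unfolding Dk_def by simp
  also have "(if t = e0 then lG / g else 0) * (\<Sum>j<h. xgen h (lG / g) (mu lL g h) n j)
      = X (Suc n) * Lp 0 e0 t"
    by (subst (2) xgen.simps) (simp add: Lp0 idmat_def del: xgen.simps)
  finally show ?case unfolding sum.atMost_Suc_shift by simp
qed

lemma main: "\<forall>n. yvec h lG lL g n (Some (h - 1, 1)) = xgen h (lG / g) (mu lL g h) n 0
          \<and> (\<Sum>s\<in>typesS h. yvec h lG lL g n s) = (\<Sum>j<h. xgen h (lG / g) (mu lL g h) n j)"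
proof
  fix n
  have Lz: "Lp (Suc i) e0 e0 = 0" for i
  proof -
    have "Lp (Suc i) e0 e0 = matmul SS (Lp i) Lm e0 e0" using Lp_comm[OF e0_mem e0_mem] by simp
    also have "\<dots> = 0" unfolding matmul_def L_e0 by simp
    finally show ?thesis .
  qed
  have 1: "yvec h lG lL g n e0 = X n"
  proof (cases n)
    case 0 then show ?thesis using y_dec[OF e0_mem, of 0] by (simp add: Lp0 idmat_def)
  next
    case (Suc m)
    show ?thesis using y_dec[OF e0_mem, of n, unfolded Suc sum.atMost_Suc_shift Lz] unfolding Suc
      by (simp add: Lp0 idmat_def)
  qed
  have "(\<Sum>s\<in>SS. yvec h lG lL g n s) = (\<Sum>s\<in>SS. \<Sum>i\<le>n. X (n - i) * Lp i e0 s)"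
    using y_dec by simp
  also have "\<dots> = (\<Sum>i\<le>n. X (n - i) * Dk i e0)"
    unfolding Dk_def by (simp add: sum_distrib_left, rule sum.swap)
  also have "\<dots> = (\<Sum>j<h. xgen h (lG / g) (mu lL g h) n j)" by (rule xsum)
  finally show "yvec h lG lL g n (Some (h - 1, 1)) = X n
          \<and> (\<Sum>s\<in>typesS h. yvec h lG lL g n s) = (\<Sum>j<h. xgen h (lG / g) (mu lL g h) n j)"
    using 1 by simp
qed

end

theorem lemma3p1:
  fixes h :: nat and lG lL g :: real
  assumes "2 \<le> h" and "0 < lG" and "0 < lL" and "0 < g"
  shows "\<forall>n. yvec h lG lL g n (Some (h - 1, 1)) = xgen h (lG / g) (mu lL g h) n 0
          \<and> (\<Sum>s\<in>typesS h. yvec h lG lL g n s) = (\<Sum>j<h. xgen h (lG / g) (mu lL g h) n j)"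
proof -
  interpret hh h lG lL g using assms by unfold_locales
  show ?thesis by (rule main)
qed



end
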